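(* With $\bar{\sigma}_g^f,\bar{\sigma}_g^o,\bar{\sigma}_c^x\in(0,1)$, $\alpha\ge0$, $U_o\in\mathbb{R}^{n_x\times n_x}$ and \[ A_\delta=\begin{bmatrix}\bar{\sigma}_g^f & \alpha\\ \bar{\sigma}_g^o\bar{\sigma}_g^f & \alpha\bar{\sigma}_g^o+\tfrac14\bar{\sigma}_c^x\|U_o\|\end{bmatrix}, \] the matrix $A_\delta$ is Schur stable ($\rho(A_\delta)<1$) if \[ -1+\bar{\sigma}_g^f+\alpha\bar{\sigma}_g^o+\tfrac14\bar{\sigma}_c^x\|U_o\|<\tfrac14\bar{\sigma}_g^f\bar{\sigma}_c^x\|U_o\|<1. \]
   Context: $\|U_o\|$ is the induced 2-norm, $\rho$ the spectral radius. (In the paper these quantities arise from an LSTM network: $\bar{\sigma}_g^\star=\sigma_g(\|[W_\star u_{\max}\ U_\star\ b_\star]\|_\infty)$, $\bar{\sigma}_c^c=\tanh(\|[W_c u_{\max}\ U_c\ b_c]\|_\infty)$, $\bar{\sigma}_c^x=\tanh(\bar{\sigma}_g^i\bar{\sigma}_c^c/(1-\bar{\sigma}_g^f))$, $\alpha=\tfrac14\|U_f\|\frac{\bar{\sigma}_g^i\bar{\sigma}_c^c}{1-\bar{\sigma}_g^f}+\bar{\sigma}_g^i\|U_c\|+\tfrac14\|U_i\|\bar{\sigma}_c^c$.) *)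

theory Defs
  imports "HOL-Analysis.Analysis"
begin

definition complexify :: "real^'n^'m \<Rightarrow> complex^'n^'m" where
  "complexify A = (\<chi> i j. complex_of_real (A $ i $ j))"

definition spectral_radius :: "real^'n^'n \<Rightarrow> real" where
  "spectral_radius A =
     Max {cmod l | l. \<exists>v::complex^'n. v \<noteq> 0 \<and> complexify A *v v = l *s v}"

definition induced_2norm :: "real^'n^'m \<Rightarrow> real" where
  "induced_2norm U = onorm (\<lambda>x. U *v x)"

end

theory Submission
  imports Defs
begin

lemma root_bound:
  fixes l :: complex and T D :: real
  assumes eq: "l * l - T * l + D = 0" and "0 \<le> D" "D < 1" "0 \<le> T" "T < 1 + D"
  shows "cmod l < 1"
proof -
  obtain x y where l: "l = Complex x y" by (cases l)
  from eq have re: "x * x - y * y - T * x + D = 0" and im: "2 * x * y - T * y = 0"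
    by (auto simp: l complex_eq_iff algebra_simps)
  show ?thesis
  proof (cases "y = 0")
    case False
    then have "2 * x - T = 0" using im by (metis mult.commute mult_eq_0_iff right_diff_distrib')
    then have "x * x + y * y = D" using re by (auto simp: algebra_simps power2_eq_square)
    then have "x^2 + y^2 < 1" using assms by (simp add: power2_eq_square)
    then show ?thesis by (simp add: l cmod_def)
  next
    case True
    then have r: "x * x - T * x + D = 0" using re by simp
    have "x \<ge> 0"
    proof (rule ccontr)
      assume "\<not> x \<ge> 0"
      then have "T * x \<le> 0" "x * x > 0" using assms by (simp_all add: mult_nonneg_nonpos mult_neg_neg)
      then show False using r assms by linarith
    qed
    moreover have "x < 1"
    proof (rule ccontr)
      assume "\<not> x < 1"
      then have "(x - 1) * (x + 1 - T) \<ge> 0" using assms \<open>\<not> x < 1\<close> by (intro mult_nonneg_nonneg) auto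
      moreover have "(x - 1) * (x + 1 - T) = (x * x - T * x + D) - (1 + D - T)"
        by (simp add: algebra_simps)
      ultimately show False using r assms by linarith
    qed
    ultimately show ?thesis by (simp add: l True cmod_def)
  qed
qed

lemma spec2:
  fixes a b c d :: real
  assumes "c \<noteq> 0" "0 \<le> a*d - b*c" "a*d - b*c < 1" "0 \<le> a + d" "a + d < 1 + (a*d - b*c)"
  shows "spectral_radius (vector [vector [a, b], vector [c, d]] :: real^2^2) < 1"
proof -
  define A where "A = (vector [vector [a, b], vector [c, d]] :: real^2^2)"
  define S where "S = {cmod l | l. \<exists>v::complex^2. v \<noteq> 0 \<and> complexify A *v v = l *s v}"
  define T where "T = a + d"
  define D where "D = a*d - b*c"
  have ev: "complexify A *v v = l *s v \<longleftrightarrow>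
      (a * v$1 + b * v$2 = l * v$1 \<and> c * v$1 + d * v$2 = l * v$2)" for v l
    by (simp add: A_def complexify_def vec_eq_iff forall_2 matrix_vector_mult_def sum_2)
  have nz: "v \<noteq> 0 \<longleftrightarrow> v$1 \<noteq> 0 \<or> v$2 \<noteq> 0" for v :: "complex^2"
    by (simp add: vec_eq_iff forall_2)
  have char: "l * l - T * l + D = 0" if "v \<noteq> 0" "complexify A *v v = l *s v" for v and l :: complex
  proof -
    have e1: "a * v$1 + b * v$2 = l * v$1" and e2: "c * v$1 + d * v$2 = l * v$2"
      using that ev by auto
    have e1': "(l - a) * v$1 = b * v$2" using e1 by (simp add: algebra_simps)
    have e2': "(l - d) * v$2 = c * v$1" using e2 by (simp add: algebra_simps)
    have "(l * l - T * l + D) * v$1 = 0"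
    proof -
      have "(l * l - T * l + D) * v$1 = (l - d) * ((l - a) * v$1) - b * (c * v$1)"
        by (simp add: T_def D_def algebra_simps)
      also have "\<dots> = (l - d) * (b * v$2) - b * ((l - d) * v$2)"
        by (simp only: e1' e2')
      finally show ?thesis by (simp add: algebra_simps)
    qed
    moreover have "(l * l - T * l + D) * v$2 = 0"
    proof -
      have "(l * l - T * l + D) * v$2 = (l - a) * ((l - d) * v$2) - c * (b * v$2)"
        by (simp add: T_def D_def algebra_simps)
      also have "\<dots> = (l - a) * (c * v$1) - c * ((l - a) * v$1)"
        by (simp only: e1' e2')
      finally show ?thesis by (simp add: algebra_simps)
    qed
    ultimately show ?thesis using that(1) nz by auto
  qed
  define s where "s = csqrt (T^2 - 4*D)"
  define r1 where "r1 = (T + s) / 2"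
  define r2 where "r2 = (T - s) / 2"
  have fact: "l * l - T * l + D = (l - r1) * (l - r2)" for l :: complex
  proof -
    have "s * s = T^2 - 4*D" unfolding s_def by (metis power2_csqrt power2_eq_square)
    then show ?thesis unfolding r1_def r2_def by (simp add: field_simps power2_eq_square)
  qed
  have sub: "S \<subseteq> {cmod r1, cmod r2}"
  proof
    fix x assume "x \<in> S"
    then obtain l v where "x = cmod l" "v \<noteq> 0" "complexify A *v v = l *s v" by (auto simp: S_def)
    then have "(l - r1) * (l - r2) = 0" using char fact by metis
    then have "l = r1 \<or> l = r2" by simp
    then show "x \<in> {cmod r1, cmod r2}" using \<open>x = cmod l\<close> by blast
  qed
  have fin: "finite S" using sub finite_subset by blast
  have "r1 * r1 - T * r1 + D = 0" using fact by simp
  define v :: "complex^2" where "v = vector [r1 - d, c]"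
  have "v \<noteq> 0" using assms(1) by (simp add: nz v_def)
  moreover have "complexify A *v v = r1 *s v"
  proof -
    have "a * (r1 - d) + b * c = r1 * (r1 - d)"
      using \<open>r1 * r1 - T * r1 + D = 0\<close> unfolding T_def D_def
      by (simp add: algebra_simps)
    then show ?thesis unfolding ev v_def by (simp add: algebra_simps)
  qed
  ultimately have "cmod r1 \<in> S" unfolding S_def by blast
  then have ne: "S \<noteq> {}" by auto
  have "\<forall>x\<in>S. x < 1"
  proof
    fix x assume "x \<in> S"
    then obtain l v where "x = cmod l" "v \<noteq> 0" "complexify A *v v = l *s v" by (auto simp: S_def)
    then have "l * l - T * l + D = 0" using char by blast
    then show "x < 1" using root_bound[of l T D] assms \<open>x = cmod l\<close> unfolding T_def D_def by simp
  qed
  then have "Max S < 1" using fin ne by simp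
  then show ?thesis unfolding spectral_radius_def A_def S_def by simp
qed

theorem proposition2:
  fixes sf so sx alpha :: real and Uo :: "real^'n^'n"
  assumes "0 < sf" "sf < 1" "0 < so" "so < 1" "0 < sx" "sx < 1" "0 \<le> alpha"
    and "-1 + sf + alpha * so + 1/4 * sx * induced_2norm Uo < 1/4 * sf * sx * induced_2norm Uo"
    and "1/4 * sf * sx * induced_2norm Uo < 1"
  shows "spectral_radius
           (vector [vector [sf, alpha],
                    vector [so * sf, alpha * so + 1/4 * sx * induced_2norm Uo]] :: real^2^2) < 1"
proof -
  have N: "induced_2norm Uo \<ge> 0" unfolding induced_2norm_def
    by (intro onorm_pos_le) (simp add: matrix_vector_mul_bounded_linear)
  let ?k = "1/4 * sx * induced_2norm Uo"
  have k: "?k \<ge> 0" using N assms by simp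
  have D: "sf * (alpha * so + ?k) - alpha * (so * sf) = sf * ?k" by (simp add: algebra_simps)
  have "0 \<le> sf * ?k" using k assms by simp
  moreover have "sf * ?k < 1" using assms by simp
  moreover have "0 \<le> sf + (alpha * so + ?k)" using assms k by simp
  moreover have "sf + (alpha * so + ?k) < 1 + sf * ?k" using assms by simp
  ultimately show ?thesis
    by (intro spec2) (use assms D N in auto)
qed

end
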